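(* Let $z_0\in T$ and $k\in\{0,1,2,\dots\}\cup\{\infty\}$. Then $U_2(T,z_0,k)$ is a dense $G_\delta$ subset of $C^k(T)$.
   Context: $D=\{|z|<1\}$, $T=\{|z|=1\}$, $D(z_0,r)$ the open disk of center $z_0$ and radius $r$. For $k\in\{0,1,2,\dots\}\cup\{\infty\}$, $C^k(T)$ is the space of $u:T\to\mathbb{C}$ such that $\theta\mapsto u(e^{i\theta})$ is $k$ times continuously differentiable on $\mathbb{R}$, with the topology given by the seminorms $\sup_{\theta\in\mathbb{R}}|\frac{d^l}{d\theta^l}u(e^{i\theta})|$ for all integers $0\le l\le k$. For $z_0\in T$ and $r>0$ put $\Omega(z_0,r)=D(z_0,r)\cap\{|z|>1\}$. $U_2(T,z_0,k)$ is the set of $u\in C^k(T)$ for which there exist no $r>0$ and no continuous $\lambda:T\cup\Omega(z_0,r)\to\mathbb{C}$ holomorphic on $\Omega(z_0,r)$ with $\lambda=u$ on $D(z_0,r)\cap T$. *)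

theory Defs
  imports "HOL-Analysis.Analysis"
begin

fun Dn :: "nat \<Rightarrow> (real \<Rightarrow> complex) \<Rightarrow> real \<Rightarrow> complex" where
  "Dn 0 f = f"
| "Dn (Suc l) f = (\<lambda>t. vector_derivative (Dn l f) (at t))"

definition onT :: "(complex \<Rightarrow> complex) \<Rightarrow> real \<Rightarrow> complex" where
  "onT u = (\<lambda>\<theta>. u (cis \<theta>))"

text \<open>C^k(T), k in nat or infinity; functions on T represented as complex functions that
  vanish off the unit circle.\<close>
definition Ck :: "enat \<Rightarrow> (complex \<Rightarrow> complex) set" where
  "Ck k = {u. (\<forall>z. z \<notin> sphere 0 1 \<longrightarrow> u z = 0) \<and>
     (\<forall>l. enat l \<le> k \<longrightarrow> continuous_on UNIV (Dn l (onT u))) \<and>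
     (\<forall>l. enat l < k \<longrightarrow> (\<forall>t. Dn l (onT u) differentiable at t))}"

definition seminorm_Ck :: "nat \<Rightarrow> (complex \<Rightarrow> complex) \<Rightarrow> real" where
  "seminorm_Ck l u = (SUP \<theta>. norm (Dn l (onT u) \<theta>))"

definition Ck_open :: "enat \<Rightarrow> (complex \<Rightarrow> complex) set \<Rightarrow> bool" where
  "Ck_open k U \<longleftrightarrow> U \<subseteq> Ck k \<and>
     (\<forall>u\<in>U. \<exists>N \<epsilon>. \<epsilon> > 0 \<and>
        {v \<in> Ck k. \<forall>l\<le>N. enat l \<le> k \<longrightarrow> seminorm_Ck l (\<lambda>z. v z - u z) < \<epsilon>} \<subseteq> U)"

lemma istopology_Ck_open: "istopology (Ck_open k)"
  unfolding istopology_def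
proof (intro conjI allI impI)
  fix S T assume S: "Ck_open k S" and T: "Ck_open k T"
  show "Ck_open k (S \<inter> T)"
    unfolding Ck_open_def
  proof (intro conjI ballI)
    show "S \<inter> T \<subseteq> Ck k" using S unfolding Ck_open_def by blast
    fix u assume u: "u \<in> S \<inter> T"
    obtain N1 e1 where 1: "e1 > 0" "{v \<in> Ck k. \<forall>l\<le>N1. enat l \<le> k \<longrightarrow> seminorm_Ck l (\<lambda>z. v z - u z) < e1} \<subseteq> S"
      using S u unfolding Ck_open_def by blast
    obtain N2 e2 where 2: "e2 > 0" "{v \<in> Ck k. \<forall>l\<le>N2. enat l \<le> k \<longrightarrow> seminorm_Ck l (\<lambda>z. v z - u z) < e2} \<subseteq> T"
      using T u unfolding Ck_open_def by blast
    show "\<exists>N \<epsilon>. \<epsilon> > 0 \<and> {v \<in> Ck k. \<forall>l\<le>N. enat l \<le> k \<longrightarrow> seminorm_Ck l (\<lambda>z. v z - u z) < \<epsilon>} \<subseteq> S \<inter> T"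
    proof (intro exI conjI)
      show "min e1 e2 > 0" using 1 2 by simp
      show "{v \<in> Ck k. \<forall>l\<le>max N1 N2. enat l \<le> k \<longrightarrow> seminorm_Ck l (\<lambda>z. v z - u z) < min e1 e2} \<subseteq> S \<inter> T"
      proof
        fix v assume v: "v \<in> {v \<in> Ck k. \<forall>l\<le>max N1 N2. enat l \<le> k \<longrightarrow> seminorm_Ck l (\<lambda>z. v z - u z) < min e1 e2}"
        then have "v \<in> {v \<in> Ck k. \<forall>l\<le>N1. enat l \<le> k \<longrightarrow> seminorm_Ck l (\<lambda>z. v z - u z) < e1}"
          by fastforce
        moreover from v have "v \<in> {v \<in> Ck k. \<forall>l\<le>N2. enat l \<le> k \<longrightarrow> seminorm_Ck l (\<lambda>z. v z - u z) < e2}"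
          by fastforce
        ultimately show "v \<in> S \<inter> T" using 1(2) 2(2) by blast
      qed
    qed
  qed
next
  fix K assume K: "\<forall>S\<in>K. Ck_open k S"
  show "Ck_open k (\<Union>K)"
    unfolding Ck_open_def
  proof (intro conjI ballI)
    show "\<Union>K \<subseteq> Ck k" using K unfolding Ck_open_def by blast
    fix u assume "u \<in> \<Union>K"
    then obtain S where "S \<in> K" "u \<in> S" by blast
    with K obtain N e where "e > 0" "{v \<in> Ck k. \<forall>l\<le>N. enat l \<le> k \<longrightarrow> seminorm_Ck l (\<lambda>z. v z - u z) < e} \<subseteq> S"
      unfolding Ck_open_def by blast
    moreover have "S \<subseteq> \<Union>K" using \<open>S \<in> K\<close> by (rule Union_upper)
    ultimately show "\<exists>N \<epsilon>. \<epsilon> > 0 \<and> {v \<in> Ck k. \<forall>l\<le>N. enat l \<le> k \<longrightarrow> seminorm_Ck l (\<lambda>z. v z - u z) < \<epsilon>} \<subseteq> \<Union>K"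
      by (intro exI[of _ N] exI[of _ e] conjI) auto
  qed
qed

definition Ck_top :: "enat \<Rightarrow> (complex \<Rightarrow> complex) topology" where
  "Ck_top k = topology (Ck_open k)"

lemma openin_Ck_top: "openin (Ck_top k) U \<longleftrightarrow> Ck_open k U"
  unfolding Ck_top_def by (simp add: istopology_Ck_open)

definition Omega :: "complex \<Rightarrow> real \<Rightarrow> complex set" where
  "Omega z0 r = ball z0 r \<inter> {z. norm z > 1}"

definition U2 :: "complex \<Rightarrow> enat \<Rightarrow> (complex \<Rightarrow> complex) set" where
  "U2 z0 k = {u \<in> Ck k. \<not> (\<exists>r>0. \<exists>g.
      continuous_on (sphere 0 1 \<union> Omega z0 r) g \<and> g holomorphic_on Omega z0 r \<and>
      (\<forall>z \<in> ball z0 r \<inter> sphere 0 1. g z = u z))}"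

end

theory Submission
  imports Defs "HOL-Complex_Analysis.Complex_Analysis" "HOL-Computational_Algebra.Polynomial"
begin


fun Cn :: "nat \<Rightarrow> (real \<Rightarrow> real) \<Rightarrow> bool" where
  "Cn 0 \<phi> = True"
| "Cn (Suc n) \<phi> = (\<exists>\<phi>'. (\<forall>x. (\<phi> has_real_derivative \<phi>' x) (at x)) \<and> Cn n \<phi>')"

lemma Cn_mono: "Cn (Suc n) \<phi> \<Longrightarrow> Cn n \<phi>"
proof (induction n arbitrary: \<phi>)
  case 0 then show ?case by simp
next
  case (Suc n)
  then obtain \<phi>' where "\<forall>x. (\<phi> has_real_derivative \<phi>' x) (at x)" "Cn (Suc n) \<phi>'" by auto
  with Suc.IH show ?case by auto
qed

lemma Cn_const: "Cn n (\<lambda>x. c)"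
proof (induction n arbitrary: c)
  case (Suc n)
  show ?case using Suc.IH[of 0] by (auto intro!: exI[of _ "\<lambda>x. 0"] derivative_eq_intros)
qed simp

lemma Cn_id: "Cn n (\<lambda>x. x)"
proof (cases n)
  case (Suc m)
  show ?thesis using Cn_const[of m 1] Suc by (auto intro!: exI[of _ "\<lambda>x. 1"] derivative_eq_intros)
qed simp

lemma Cn_add: "Cn n f \<Longrightarrow> Cn n g \<Longrightarrow> Cn n (\<lambda>x. f x + g x)"
proof (induction n arbitrary: f g)
  case (Suc n)
  then obtain f' g' where f': "\<forall>x. (f has_real_derivative f' x) (at x)" "Cn n f'"
    and g': "\<forall>x. (g has_real_derivative g' x) (at x)" "Cn n g'" by auto
  show ?case using Suc.IH[OF f'(2) g'(2)] f' g'
    by (auto intro!: exI[of _ "\<lambda>x. f' x + g' x"] DERIV_add)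
qed simp

lemma Cn_mult: "Cn n f \<Longrightarrow> Cn n g \<Longrightarrow> Cn n (\<lambda>x. f x * g x)"
proof (induction n arbitrary: f g)
  case (Suc n)
  then obtain f' g' where f': "\<forall>x. (f has_real_derivative f' x) (at x)" "Cn n f'"
    and g': "\<forall>x. (g has_real_derivative g' x) (at x)" "Cn n g'" by auto
  have "Cn n (\<lambda>x. f' x * g x + g' x * f x)"
    using Suc.IH[OF f'(2) Cn_mono[OF Suc.prems(2)]] Suc.IH[OF g'(2) Cn_mono[OF Suc.prems(1)]]
    by (rule Cn_add)
  then show ?case using f' g'
    by (auto intro!: exI[of _ "\<lambda>x. f' x * g x + g' x * f x"] DERIV_mult)
qed simp

lemma Cn_minus: "Cn n f \<Longrightarrow> Cn n (\<lambda>x. - f x)"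
  using Cn_mult[OF Cn_const[of n "-1"]] by simp

lemma Cn_diff: "Cn n f \<Longrightarrow> Cn n g \<Longrightarrow> Cn n (\<lambda>x. f x - g x)"
  using Cn_add[OF _ Cn_minus] by simp

lemma Cn_comp: "Cn n f \<Longrightarrow> Cn n g \<Longrightarrow> Cn n (\<lambda>x. f (g x))"
proof (induction n arbitrary: f g)
  case (Suc n)
  then obtain f' g' where f': "\<forall>x. (f has_real_derivative f' x) (at x)" "Cn n f'"
    and g': "\<forall>x. (g has_real_derivative g' x) (at x)" "Cn n g'" by auto
  have "Cn n (\<lambda>x. f' (g x) * g' x)"
    using Suc.IH[OF f'(2) Cn_mono[OF Suc.prems(2)]] g'(2) by (rule Cn_mult)
  moreover have "\<forall>x. ((\<lambda>x. f (g x)) has_real_derivative f' (g x) * g' x) (at x)"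
    using f' g' by (blast intro: DERIV_chain2)
  ultimately show ?case by auto
qed simp

lemma Cn_sin_cos: "Cn n sin \<and> Cn n cos"
proof (induction n)
  case (Suc n)
  then have "Cn n (\<lambda>x. - sin x)" using Cn_minus[of n sin] by simp
  moreover have "\<forall>x. (sin has_real_derivative cos x) (at x)" "\<forall>x. (cos has_real_derivative - sin x) (at x)"
    by (auto intro: DERIV_sin DERIV_cos)
  ultimately show ?case using Suc by (metis Cn.simps(2))
qed simp

definition flat :: "real poly \<Rightarrow> real \<Rightarrow> real" where
  "flat p x = (if x > 0 then poly p (1/x) * exp (-1/x) else 0)"

lemma lim_poly_exp: fixes p :: "real poly" shows "((\<lambda>y. poly p y * exp (-y)) \<longlongrightarrow> 0) at_top"
proof -
  have "((\<lambda>y. \<Sum>i\<le>degree p. coeff p i * (y ^ i / exp y)) \<longlongrightarrow> 0) at_top"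
  proof (rule tendsto_null_sum)
    fix i
    have "((\<lambda>y. coeff p i * (y ^ i / exp y)) \<longlongrightarrow> coeff p i * 0) at_top"
      by (intro tendsto_intros tendsto_power_div_exp_0)
    then show "((\<lambda>y. coeff p i * (y ^ i / exp y)) \<longlongrightarrow> 0) at_top" by simp
  qed
  moreover have "(\<lambda>y. \<Sum>i\<le>degree p. coeff p i * (y ^ i / exp y)) = (\<lambda>y. poly p y * exp (-y))"
    by (auto simp: poly_altdef sum_distrib_right exp_minus divide_inverse mult.assoc)
  ultimately show ?thesis by simp
qed

lemma flat_lim: fixes p :: "real poly" shows "((\<lambda>y. poly p (1/y) * exp (-1/y)) \<longlongrightarrow> 0) (at_right 0)"
  apply (subst filterlim_at_right_to_top)
  using lim_poly_exp[of p] by (simp add: divide_inverse)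

lemma flat_deriv:
  "(flat p has_real_derivative flat (pCons 0 (pCons 0 (p - pderiv p))) x) (at x)"
proof -
  let ?q = "pCons 0 (pCons 0 (p - pderiv p))"
  consider "x > 0" | "x < 0" | "x = 0" by linarith
  then show ?thesis
  proof cases
    case 1
    have d1: "((\<lambda>x. 1/x) has_real_derivative (-(1/x^2))) (at x)"
      using 1 by (auto intro!: derivative_eq_intros simp: power2_eq_square)
    have d2: "((\<lambda>x. poly p (1/x)) has_real_derivative poly (pderiv p) (1/x) * (-(1/x^2))) (at x)"
      by (rule DERIV_chain2[OF poly_DERIV d1])
    have d3: "((\<lambda>x. exp(-1/x)) has_real_derivative exp(-1/x) * (1/x^2)) (at x)"
      using 1 by (auto intro!: derivative_eq_intros simp: power2_eq_square)
    have d4: "((\<lambda>x. poly p (1/x) * exp(-1/x)) has_real_derivative flat ?q x) (at x)"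
      using DERIV_mult[OF d2 d3]
      by (rule DERIV_cong) (use 1 in \<open>simp add: flat_def algebra_simps power2_eq_square\<close>)
    show ?thesis
      by (rule has_field_derivative_transform_within_open[OF d4, of "{0<..}"]) (use 1 in \<open>auto simp: flat_def\<close>)
  next
    case 2
    have "((\<lambda>x. 0) has_real_derivative flat ?q x) (at x)"
      using 2 by (simp add: flat_def)
    then show ?thesis
      by (rule has_field_derivative_transform_within_open[of _ _ _ "{..<0}"]) (use 2 in \<open>auto simp: flat_def\<close>)
  next
    case 3
    have L: "((\<lambda>y. flat p y / y) \<longlongrightarrow> 0) (at_left 0)"
    proof (rule tendsto_eventually)
      show "\<forall>\<^sub>F y in at_left 0. flat p y / y = 0"
        unfolding eventually_at_filter by (auto simp: flat_def)
    qed
    have R0: "((\<lambda>y. poly (pCons 0 p) (1/y) * exp (-1/y)) \<longlongrightarrow> 0) (at_right 0)"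
      by (rule flat_lim)
    have R: "((\<lambda>y. flat p y / y) \<longlongrightarrow> 0) (at_right 0)"
    proof (rule Lim_transform_eventually[OF R0])
      show "\<forall>\<^sub>F y in at_right 0. poly (pCons 0 p) (1/y) * exp (-1/y) = flat p y / y"
        unfolding eventually_at_filter by (auto simp: flat_def)
    qed
    have "((\<lambda>y. (flat p y - flat p 0) / (y - 0)) \<longlongrightarrow> 0) (at 0)"
      using L R by (simp add: flat_def filterlim_at_split)
    then have "(flat p has_real_derivative 0) (at 0)"
      by (simp add: has_field_derivative_iff)
    then show ?thesis using 3 by (simp add: flat_def)
  qed
qed

lemma Cn_flat: "Cn n (flat p)"
proof (induction n arbitrary: p)
  case (Suc n)
  then show ?case using flat_deriv by auto
qed simp

definition sm :: "(real \<Rightarrow> real) \<Rightarrow> bool" where "sm \<phi> \<longleftrightarrow> (\<forall>n. Cn n \<phi>)"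

lemma sm_deriv:
  assumes "sm \<phi>"
  shows "\<forall>x. (\<phi> has_real_derivative deriv \<phi> x) (at x)" "sm (deriv \<phi>)"
proof -
  have *: "\<phi>' = deriv \<phi>" if "\<forall>x. (\<phi> has_real_derivative \<phi>' x) (at x)" for \<phi>'
    using that by (auto intro!: ext DERIV_imp_deriv[symmetric])
  from assms have "Cn (Suc 0) \<phi>" by (simp add: sm_def)
  then obtain \<phi>' where "\<forall>x. (\<phi> has_real_derivative \<phi>' x) (at x)" by auto
  then show "\<forall>x. (\<phi> has_real_derivative deriv \<phi> x) (at x)" using * by metis
  show "sm (deriv \<phi>)" unfolding sm_def
  proof
    fix n
    from assms have "Cn (Suc n) \<phi>" by (simp add: sm_def)
    then obtain \<phi>' where "\<forall>x. (\<phi> has_real_derivative \<phi>' x) (at x)" "Cn n \<phi>'" by auto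
    then show "Cn n (deriv \<phi>)" using * by metis
  qed
qed

lemma sm_iter: "sm \<phi> \<Longrightarrow> sm ((deriv ^^ l) \<phi>)"
  by (induction l) (auto intro: sm_deriv)

lemma Dn_real:
  assumes "sm \<phi>"
  shows "Dn l (\<lambda>t. complex_of_real (\<phi> t)) = (\<lambda>t. of_real ((deriv ^^ l) \<phi> t))"
proof (induction l)
  case (Suc l)
  have "vector_derivative (\<lambda>t. complex_of_real ((deriv ^^ l) \<phi> t)) (at t) = of_real ((deriv ^^ Suc l) \<phi> t)" for t
    using sm_deriv(1)[OF sm_iter[OF assms, of l]]
    by (auto intro!: vector_derivative_at has_vector_derivative_of_real)
  then show ?case using Suc by simp
qed simp

lemma Dn_real_hvd:
  assumes "sm \<phi>"
  shows "(Dn l (\<lambda>t. complex_of_real (\<phi> t)) has_vector_derivative of_real ((deriv ^^ Suc l) \<phi> t)) (at t)"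
  unfolding Dn_real[OF assms]
  using sm_deriv(1)[OF sm_iter[OF assms, of l]]
  by (auto intro!: has_vector_derivative_of_real)

lemma Dn_real_diff:
  assumes "sm \<phi>"
  shows "Dn l (\<lambda>t. complex_of_real (\<phi> t)) differentiable at t"
  using Dn_real_hvd[OF assms] by (rule differentiableI_vector)

lemma Dn_real_cont:
  assumes "sm \<phi>"
  shows "continuous_on UNIV (Dn l (\<lambda>t. complex_of_real (\<phi> t)))"
  using Dn_real_diff[OF assms]
  by (auto intro!: continuous_at_imp_continuous_on differentiable_imp_continuous_within)

lemma deriv_periodic:
  assumes per: "\<forall>x. \<psi> (x + p) = \<psi> x" and d: "\<forall>x. (\<psi> has_real_derivative deriv \<psi> x) (at x)"
  shows "deriv \<psi> (x + p) = deriv \<psi> x"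
proof -
  have "((\<lambda>y. \<psi> (y + p)) has_real_derivative deriv \<psi> (x+p) * 1) (at x)"
    by (rule DERIV_chain2[where f=\<psi>]) (use d in \<open>auto intro!: derivative_eq_intros\<close>)
  moreover have "(\<lambda>y. \<psi> (y + p)) = \<psi>" using per by auto
  ultimately have "(\<psi> has_real_derivative deriv \<psi> (x+p)) (at x)" by simp
  then show ?thesis using d DERIV_unique by blast
qed

lemma iter_periodic:
  assumes "sm \<phi>" "\<forall>x. \<phi> (x + p) = \<phi> x"
  shows "\<forall>x. (deriv ^^ l) \<phi> (x + p) = (deriv ^^ l) \<phi> x"
proof (induction l)
  case (Suc l)
  then show ?case
    using deriv_periodic[OF Suc sm_deriv(1)[OF sm_iter[OF assms(1), of l]]] by simp
qed (use assms in simp)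

lemma periodic_bounded:
  fixes \<psi> :: "real \<Rightarrow> 'a::real_normed_vector"
  assumes cont: "continuous_on UNIV \<psi>" and per: "\<forall>x. \<psi> (x + 2*pi) = \<psi> x"
  shows "\<exists>B. \<forall>x. norm (\<psi> x) \<le> B"
proof -
  have "compact (\<psi> ` {0..2*pi})"
    by (rule compact_continuous_image) (use cont in \<open>auto intro: continuous_on_subset\<close>)
  then obtain B where B: "\<forall>y\<in>\<psi> ` {0..2*pi}. norm y \<le> B"
    using compact_imp_bounded bounded_iff by metis
  have nat: "\<psi> (y + 2*pi*real n) = \<psi> y" for y n
  proof (induction n)
    case (Suc n)
    have "y + 2*pi*real (Suc n) = (y + 2*pi*real n) + 2*pi" by (simp add: algebra_simps)
    then show ?case using per Suc by metis
  qed simp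
  have int: "\<psi> (y + 2*pi * of_int k) = \<psi> y" for y k
  proof (cases "k \<ge> 0")
    case True
    then obtain n where "k = int n" by (metis nonneg_eq_int)
    then show ?thesis using nat by simp
  next
    case False
    define n where "n = nat (-k)"
    have n: "k = - int n" using False by (simp add: n_def)
    have "\<psi> y = \<psi> ((y - 2*pi*real n) + 2*pi*real n)" by simp
    also have "\<dots> = \<psi> (y - 2*pi*real n)" by (rule nat)
    finally show ?thesis using n by simp
  qed
  show ?thesis
  proof (intro exI allI)
    fix x
    define k where "k = \<lfloor>x / (2*pi)\<rfloor>"
    define x' where "x' = x - 2*pi * of_int k"
    have "of_int k \<le> x / (2*pi)" "x / (2*pi) < of_int k + 1" unfolding k_def by linarith+
    then have "2*pi * of_int k \<le> x" "x < 2*pi * of_int k + 2*pi"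
      using pi_gt_zero by (simp_all add: field_simps)
    then have "x' \<in> {0..2*pi}" unfolding x'_def by auto
    moreover have "\<psi> x = \<psi> x'" using int[of x' k] unfolding x'_def by simp
    ultimately show "norm (\<psi> x) \<le> B" using B by auto
  qed
qed



lemma csqrt_re_sq:
  fixes s :: complex
  assumes "norm s \<le> 1/2" "1 \<le> norm (1 + s)"
  shows "3/8 * norm s \<le> (Re (csqrt s))^2"
proof -
  define w where "w = csqrt s"
  have ws: "s = w * w" by (simp add: w_def power2_eq_square[symmetric])
  have Res: "Re s = (Re w)^2 - (Im w)^2" using ws by (simp add: power2_eq_square)
  have Ims: "Im s = 2 * Re w * Im w" using ws by (simp add: power2_eq_square)
  have "norm s = (norm w)^2" using ws by (simp add: norm_mult power2_eq_square)
  then have ns: "norm s = (Re w)^2 + (Im w)^2" by (simp add: cmod_power2)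
  have ns2: "(norm s)^2 = (Re s)^2 + (Im s)^2" by (simp add: cmod_power2)
  have "1 \<le> (norm (1 + s))^2" using assms(2) by (simp add: one_le_power)
  also have "(norm (1 + s))^2 = (1 + Re s)^2 + (Im s)^2" by (simp add: cmod_power2)
  finally have "0 \<le> 2 * Re s + (norm s)^2" using ns2 by (simp add: power2_eq_square algebra_simps)
  moreover have "norm s * norm s \<le> norm s * (1/2)"
    by (rule mult_left_mono) (use assms(1) in auto)
  then have "(norm s)^2 \<le> norm s * (1/2)" by (simp add: power2_eq_square)
  ultimately show ?thesis using Res ns unfolding w_def by linarith
qed

lemma isCont_csqrt0: "isCont csqrt 0"
proof -
  have "((\<lambda>x::complex. norm x) \<longlongrightarrow> 0) (at 0)"
    by (rule tendsto_norm_zero) (rule tendsto_ident_at)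
  then have "((\<lambda>x::complex. sqrt (norm x)) \<longlongrightarrow> sqrt 0) (at 0)"
    by (rule tendsto_real_sqrt)
  then have "((\<lambda>x. norm (csqrt x)) \<longlongrightarrow> 0) (at (0::complex))" by (simp only: norm_csqrt real_sqrt_zero)
  then have "(csqrt \<longlongrightarrow> 0) (at (0::complex))" by (rule tendsto_norm_zero_cancel)
  then show ?thesis unfolding isCont_def by simp
qed

lemma open_Omega: "open (Omega z0 r)"
  unfolding Omega_def by (intro open_Int open_ball open_Collect_less continuous_intros)

lemma Omega_mono: "r \<le> r' \<Longrightarrow> Omega z0 r \<subseteq> Omega z0 r'"
  unfolding Omega_def by auto

lemma estimate:
  fixes D :: "complex \<Rightarrow> complex" and z0 z :: complex
  assumes z0: "norm z0 = 1" and r': "0 < r'" "r' \<le> 1/2" "r' < R"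
    and cont: "continuous_on (sphere 0 1 \<union> Omega z0 R) D"
    and hol: "D holomorphic_on Omega z0 R"
    and dS: "\<And>w. w \<in> sphere 0 1 \<Longrightarrow> norm (D w) \<le> \<delta>"
    and dA: "\<And>w. w \<in> Omega z0 R \<Longrightarrow> norm (D w) \<le> A"
    and A: "0 \<le> A" and \<delta>: "0 \<le> \<delta>" and lam: "0 \<le> lam"
    and z: "z \<in> Omega z0 (r'/4)"
  shows "norm (D z) \<le> (A + \<delta> * exp (lam * sqrt (3*r'/8))) * exp (- lam * (sqrt (3*r'/8) - sqrt (r'/4)))"
proof -
  define a1 where "a1 = sqrt (3*r'/8)"
  define a2 where "a2 = sqrt (r'/4)"
  define s where "s w = (w - z0) * cnj z0" for w
  define W where "W w = exp (of_real lam * (of_real a1 - csqrt (s w)))" for w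
  define V where "V = Omega z0 r'"
  define B0 where "B0 = A + \<delta> * exp (lam * a1)"
  have zz: "z0 * cnj z0 = 1"
    using complex_norm_square[of z0] z0 by simp
  have ns: "norm (s w) = norm (w - z0)" for w
    using z0 by (simp add: s_def norm_mult)
  have ws: "w = z0 * (1 + s w)" for w
  proof -
    have "z0 * (1 + s w) = z0 + (w - z0) * (z0 * cnj z0)"
      by (simp add: s_def algebra_simps)
    then show ?thesis using zz by simp
  qed
  have nw: "norm w = norm (1 + s w)" for w
    using ws[of w] z0 by (metis mult_cancel_right1 norm_mult)
  have normW: "norm (W w) = exp (lam * (a1 - Re (csqrt (s w))))" for w
    by (simp add: W_def norm_exp_eq_Re)
  have openV: "open V" unfolding V_def by (rule open_Omega)
  have clV: "closure V \<subseteq> cball z0 r' \<inter> {w. 1 \<le> norm w}"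
    unfolding V_def Omega_def
    by (rule closure_minimal) (auto intro!: closed_Int closed_Collect_le continuous_intros)
  have clV2: "closure V \<subseteq> sphere 0 1 \<union> Omega z0 R"
    using clV r' by (force simp: Omega_def dist_commute)
  have notnp: "s w \<notin> \<real>\<^sub>\<le>\<^sub>0" if w: "w \<in> closure V" "s w \<noteq> 0" for w
  proof
    assume np: "s w \<in> \<real>\<^sub>\<le>\<^sub>0"
    then have re: "Re (s w) \<le> 0" and im: "Im (s w) = 0" by (auto simp: complex_nonpos_Reals_iff)
    have "norm (s w) \<le> r'" using w clV ns by (auto simp: dist_norm norm_minus_commute)
    then have "\<bar>Re (s w)\<bar> \<le> 1/2" using abs_Re_le_cmod[of "s w"] r' by linarith
    have "norm (1 + s w) = \<bar>1 + Re (s w)\<bar>" using im by (simp add: cmod_def)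
    moreover have "1 \<le> norm (1 + s w)" using w clV nw[of w] by auto
    ultimately have "Re (s w) \<ge> 0" using \<open>\<bar>Re (s w)\<bar> \<le> 1/2\<close> by linarith
    then have "s w = 0" using re im by (simp add: complex_eq_iff)
    then show False using w by simp
  qed
  have Vs: "s w \<noteq> 0" if "w \<in> V" for w
  proof
    assume "s w = 0"
    then have "w = z0" using ws[of w] by simp
    then show False using that z0 by (simp add: V_def Omega_def)
  qed
  have holW: "W holomorphic_on V"
    unfolding W_def s_def[abs_def]
    using notnp Vs closure_subset[of V] s_def
    by (auto intro!: holomorphic_intros)
  have holf: "(\<lambda>w. D w * W w) holomorphic_on interior V"
    using interior_open[OF openV] holW
      holomorphic_on_subset[OF hol, of V] Omega_mono[of r' R z0] r'
    by (auto simp: V_def intro!: holomorphic_intros)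
  have contW: "continuous_on (closure V) W"
  proof (rule continuous_at_imp_continuous_on, rule ballI)
    fix w assume w: "w \<in> closure V"
    have cs: "isCont s w" unfolding s_def by (intro continuous_intros)
    have "isCont (\<lambda>w. csqrt (s w)) w"
    proof (cases "s w = 0")
      case True
      then show ?thesis using isCont_o2[OF cs, of csqrt] isCont_csqrt0 by simp
    next
      case False
      then show ?thesis using notnp[OF w False] cs by simp
    qed
    then show "isCont W w" unfolding W_def by (intro continuous_intros)
  qed
  have contf: "continuous_on (closure V) (\<lambda>w. D w * W w)"
    by (intro continuous_on_mult continuous_on_subset[OF cont clV2] contW)
  have bV: "bounded V" unfolding V_def Omega_def by (rule bounded_subset[OF bounded_ball]) auto
  have ea: "0 \<le> \<delta> * exp (lam * a1)" using \<delta> by simp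
  have fr: "norm (D w * W w) \<le> B0" if w: "w \<in> frontier V" for w
  proof -
    have wc: "w \<in> closure V" and wn: "w \<notin> V"
      using w by (auto simp: frontier_def interior_open[OF openV])
    then have w1: "1 \<le> norm w" and w2: "dist z0 w \<le> r'" using clV by auto
    show ?thesis
    proof (cases "norm w = 1")
      case True
      then have "norm (D w) \<le> \<delta>" using dS by simp
      moreover have "norm (W w) \<le> exp (lam * a1)"
        unfolding normW using lam Re_csqrt[of "s w"]
        by (simp add: mult_left_mono algebra_simps)
      ultimately have "norm (D w * W w) \<le> \<delta> * exp (lam * a1)"
        unfolding norm_mult by (rule mult_mono) (use \<delta> in auto)
      then show ?thesis unfolding B0_def using A by linarith
    next
      case False
      then have w3: "1 < norm w" using w1 by simp
      then have "dist z0 w = r'" using wn w2 by (auto simp: V_def Omega_def)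
      then have wO: "w \<in> Omega z0 R" using w3 r' by (auto simp: Omega_def)
      have nsw: "norm (s w) = r'" using \<open>dist z0 w = r'\<close> ns by (simp add: dist_norm norm_minus_commute)
      have "3/8 * norm (s w) \<le> (Re (csqrt (s w)))^2"
        by (rule csqrt_re_sq) (use nsw r' nw[of w] w1 in auto)
      then have "a1 \<le> sqrt ((Re (csqrt (s w)))^2)" unfolding a1_def nsw
        by (intro real_sqrt_le_mono) simp
      also have "\<dots> = Re (csqrt (s w))" using Re_csqrt[of "s w"] by simp
      finally have "lam * (a1 - Re (csqrt (s w))) \<le> 0" using lam by (simp add: mult_nonneg_nonpos)
      then have "norm (W w) \<le> 1" unfolding normW by simp
      moreover have "norm (D w) \<le> A" using dA wO by simp
      ultimately have "norm (D w * W w) \<le> A * 1"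
        using mult_mono[of "norm (D w)" A "norm (W w)" 1] A by (simp add: norm_mult)
      then show ?thesis unfolding B0_def using ea by linarith
    qed
  qed
  have zV: "z \<in> V" using z Omega_mono[of "r'/4" r' z0] r' by (auto simp: V_def)
  have mm: "norm (D z * W z) \<le> B0"
    by (rule maximum_modulus_frontier[OF holf contf bV fr zV])
  have "Re (csqrt (s z)) \<le> norm (csqrt (s z))" by (rule complex_Re_le_cmod)
  also have "\<dots> = sqrt (norm (s z))" by simp
  also have "\<dots> \<le> a2" unfolding a2_def using z ns[of z]
    by (intro real_sqrt_le_mono) (auto simp: Omega_def dist_norm norm_minus_commute)
  finally have "lam * (a1 - a2) \<le> lam * (a1 - Re (csqrt (s z)))"
    using lam by (intro mult_left_mono) auto
  then have "exp (lam * (a1 - a2)) \<le> norm (W z)" unfolding normW by simp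
  then have "norm (D z) * exp (lam * (a1 - a2)) \<le> B0"
    using mm by (metis norm_ge_zero norm_mult mult_left_mono order_trans)
  then have "norm (D z) * exp (lam * (a1 - a2)) * exp (- lam * (a1 - a2)) \<le> B0 * exp (- lam * (a1 - a2))"
    by (simp add: mult_right_mono)
  then have "norm (D z) \<le> B0 * exp (- lam * (a1 - a2))"
    by (simp add: mult.assoc exp_add[symmetric])
  then show ?thesis unfolding B0_def a1_def a2_def .
qed



definition hfun :: "complex \<Rightarrow> complex \<Rightarrow> complex" where
  "hfun z0 z = (if z \<in> sphere 0 1 then complex_of_real (flat 1 (Im (z * cnj z0))) else 0)"

definition phi :: "complex \<Rightarrow> real \<Rightarrow> real" where
  "phi z0 \<theta> = flat 1 (sin \<theta> * Re z0 - cos \<theta> * Im z0)"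

lemma onT_hfun: "onT (hfun z0) = (\<lambda>\<theta>. complex_of_real (phi z0 \<theta>))"
  by (auto simp: onT_def hfun_def phi_def algebra_simps)

lemma sm_phi: "sm (phi z0)"
  unfolding sm_def phi_def
  using Cn_comp[OF Cn_flat Cn_diff[OF Cn_mult[OF conjunct1[OF Cn_sin_cos] Cn_const]
        Cn_mult[OF conjunct2[OF Cn_sin_cos] Cn_const]]] by blast

lemma phi_periodic: "\<forall>x. phi z0 (x + 2*pi) = phi z0 x"
  by (simp add: phi_def)

lemma Dn_hfun_diff: "Dn l (onT (hfun z0)) differentiable at t"
  unfolding onT_hfun by (rule Dn_real_diff[OF sm_phi])

lemma hfun_Ck: "hfun z0 \<in> Ck k"
  unfolding Ck_def
  using Dn_hfun_diff Dn_real_cont[OF sm_phi] onT_hfun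
  by (auto simp: hfun_def)

lemma hfun_bound: "\<exists>B. \<forall>\<theta>. norm (Dn l (onT (hfun z0)) \<theta>) \<le> B"
proof -
  have "\<exists>B. \<forall>x. norm ((deriv ^^ l) (phi z0) x) \<le> B"
  proof (rule periodic_bounded)
    show "continuous_on UNIV ((deriv ^^ l) (phi z0))"
      using sm_deriv(1)[OF sm_iter[OF sm_phi, of l]]
      by (auto intro!: continuous_at_imp_continuous_on DERIV_isCont)
    show "\<forall>x. (deriv ^^ l) (phi z0) (x + 2 * pi) = (deriv ^^ l) (phi z0) x"
      by (rule iter_periodic[OF sm_phi phi_periodic])
  qed
  then show ?thesis unfolding onT_hfun Dn_real[OF sm_phi] by simp
qed

lemma flat1_pos: "x > 0 \<Longrightarrow> flat 1 x > 0" by (simp add: flat_def)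
lemma flat1_nonpos: "x \<le> 0 \<Longrightarrow> flat 1 x = 0" by (simp add: flat_def)

lemma not_ext:
  assumes z0: "norm z0 = 1"
  shows "\<not> (\<exists>r>0. \<exists>g. continuous_on (sphere 0 1 \<union> Omega z0 r) g \<and> g holomorphic_on Omega z0 r \<and>
            (\<forall>z\<in>ball z0 r \<inter> sphere 0 1. g z = hfun z0 z))"
proof
  assume "\<exists>r>0. \<exists>g. continuous_on (sphere 0 1 \<union> Omega z0 r) g \<and> g holomorphic_on Omega z0 r \<and>
            (\<forall>z\<in>ball z0 r \<inter> sphere 0 1. g z = hfun z0 z)"
  then obtain r g where r: "r > 0" and contg: "continuous_on (sphere 0 1 \<union> Omega z0 r) g"
    and holg: "g holomorphic_on Omega z0 r" and eqg: "\<And>z. z \<in> ball z0 r \<inter> sphere 0 1 \<Longrightarrow> g z = hfun z0 z"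
    by blast
  define P where "P w = z0 * exp w" for w
  have zz: "cnj z0 * z0 = 1"
    using complex_norm_square[of z0] z0 by (simp add: mult.commute)
  have nP: "norm (P w) = exp (Re w)" for w using z0 by (simp add: P_def norm_mult norm_exp_eq_Re)
  have dP: "dist (P w) z0 = norm (exp w - 1)" for w
  proof -
    have "P w - z0 = z0 * (exp w - 1)" by (simp add: P_def algebra_simps)
    then show ?thesis using z0 by (simp add: dist_norm norm_mult)
  qed
  have "isCont exp (0::complex)" by simp
  then have ed: "\<forall>e>0. \<exists>d>0. \<forall>x'. dist x' 0 < d \<longrightarrow> dist (exp x') (exp (0::complex)) < e"
    by (rule continuous_at_eps_delta[THEN iffD1])
  have "\<exists>d>0. \<forall>x'. dist x' 0 < d \<longrightarrow> dist (exp x') (exp (0::complex)) < r"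
    by (rule ed[rule_format, OF r])
  then obtain d where d: "d > 0" "\<And>w::complex. dist w 0 < d \<Longrightarrow> dist (exp w) (exp 0) < r"
    by auto
  define \<rho> where "\<rho> = min d 1"
  have \<rho>: "0 < \<rho>" "\<rho> \<le> 1" using d by (auto simp: \<rho>_def)
  have Pball: "dist z0 (P w) < r" if "norm w < \<rho>" for w
    using d(2)[of w] that dP[of w] by (simp add: \<rho>_def dist_commute dist_norm norm_minus_commute)
  define Wc where "Wc = ball 0 \<rho> \<inter> {w. 0 \<le> Re w}"
  define Wp where "Wp = ball 0 \<rho> \<inter> {w. 0 < Re w}"
  have PWc: "P w \<in> sphere 0 1 \<union> Omega z0 r" if "w \<in> Wc" for w
  proof (cases "Re w = 0")
    case True then show ?thesis using nP[of w] by simp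
  next
    case False
    then have "Re w > 0" using that by (auto simp: Wc_def)
    then show ?thesis using nP[of w] Pball[of w] that by (auto simp: Omega_def Wc_def)
  qed
  have PWp: "P w \<in> Omega z0 r" if "w \<in> Wp" for w
    using nP[of w] Pball[of w] that by (auto simp: Omega_def Wp_def)
  have Fbd: "g (P w) = complex_of_real (flat 1 (sin (Im w)))" if "norm w < \<rho>" "Re w = 0" for w
  proof -
    have "P w \<in> ball z0 r \<inter> sphere 0 1" using that nP[of w] Pball[of w] by auto
    then have gh: "g (P w) = hfun z0 (P w)" by (rule eqg)
    have Pc: "P w * cnj z0 = exp w * (cnj z0 * z0)" by (simp add: P_def mult_ac)
    have "Im (P w * cnj z0) = Im (exp w)" using Pc zz by simp
    then have "hfun z0 (P w) = complex_of_real (flat 1 (Im (exp w)))"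
      using nP[of w] that by (simp add: hfun_def)
    also have "Im (exp w) = sin (Im w)" using that by (simp add: Im_exp)
    finally show ?thesis using gh by simp
  qed
  define F where "F = g \<circ> P"
  have cP: "continuous_on A P" for A unfolding P_def by (intro continuous_intros)
  have hP: "P holomorphic_on A" for A unfolding P_def by (intro holomorphic_intros)
  have subc: "P ` Wc \<subseteq> sphere 0 1 \<union> Omega z0 r" using PWc by blast
  have subp: "P ` Wp \<subseteq> Omega z0 r" using PWp by blast
  have contF: "continuous_on Wc F"
    unfolding F_def by (rule continuous_on_compose[OF cP continuous_on_subset[OF contg subc]])
  have holF: "F holomorphic_on Wp"
    unfolding F_def by (rule holomorphic_on_compose_gen[OF hP holg subp])
  have openWp: "open Wp" unfolding Wp_def by (intro open_Int open_ball open_halfspace_Re_gt)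
  have convWp: "convex Wp" unfolding Wp_def by (intro convex_Int convex_ball convex_halfspace_Re_gt)
  \<comment> \<open>Step 1: vanishing near a point of the zero arc\<close>
  define c where "c = - (complex_of_real (\<rho>/2)) * \<i>"
  define Bl where "Bl = ball c (\<rho>/4)"
  have nc: "norm c = \<rho>/2" using \<rho> by (simp add: c_def norm_mult)
  have BlW: "norm w < \<rho>" if "w \<in> Bl" for w
  proof -
    have "norm w \<le> norm c + norm (w - c)" by (metis add.commute diff_add_cancel norm_triangle_ineq)
    also have "norm (w - c) < \<rho>/4" using that by (simp add: Bl_def dist_norm norm_minus_commute)
    finally show ?thesis using nc \<rho> by linarith
  qed
  have BlIm: "Im w < 0 \<and> Im w > -1" if "w \<in> Bl" for w
  proof -
    have "\<bar>Im w - Im c\<bar> \<le> norm (w - c)" by (metis abs_Im_le_cmod minus_complex.sel(2))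
    also have "norm (w - c) < \<rho>/4" using that by (simp add: Bl_def dist_norm norm_minus_commute)
    finally have "\<bar>Im w - Im c\<bar> < \<rho>/4" .
    moreover have "Im c = - (\<rho>/2)" by (simp add: c_def)
    ultimately have "\<bar>Im w + \<rho>/2\<bar> < \<rho>/4" by simp
    then have "Im w + \<rho>/2 < \<rho>/4 \<and> - (Im w + \<rho>/2) < \<rho>/4" by (simp only: abs_less_iff)
    then show ?thesis using \<rho> by linarith
  qed
  define Ft where "Ft w = (if Re w \<le> 0 then 0 else F w)" for w
  have Ft_cont: "continuous_on Bl Ft"
  proof -
    have eqS: "Bl = (Bl \<inter> {w. Re w \<le> 0}) \<union> (Bl \<inter> {w. 0 \<le> Re w})" by auto
    have "continuous_on ((Bl \<inter> {w. Re w \<le> 0}) \<union> (Bl \<inter> {w. 0 \<le> Re w}))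
            (\<lambda>w. if Re w \<le> 0 then (\<lambda>_. 0) w else F w)"
    proof (rule continuous_on_cases_local)
      show "closedin (top_of_set (Bl \<inter> {w. Re w \<le> 0} \<union> Bl \<inter> {w. 0 \<le> Re w})) (Bl \<inter> {w. Re w \<le> 0})"
        by (subst eqS[symmetric], rule closedin_closed_Int, rule closed_halfspace_Re_le)
      show "closedin (top_of_set (Bl \<inter> {w. Re w \<le> 0} \<union> Bl \<inter> {w. 0 \<le> Re w})) (Bl \<inter> {w. 0 \<le> Re w})"
        by (subst eqS[symmetric], rule closedin_closed_Int, rule closed_halfspace_Re_ge)
      show "continuous_on (Bl \<inter> {w. Re w \<le> 0}) (\<lambda>_. 0)" by simp
      show "continuous_on (Bl \<inter> {w. 0 \<le> Re w}) F"
        by (rule continuous_on_subset[OF contF]) (use BlW in \<open>auto simp: Wc_def\<close>)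
      fix w assume "w \<in> Bl \<inter> {w. Re w \<le> 0} \<and> \<not> Re w \<le> 0 \<or> w \<in> Bl \<inter> {w. 0 \<le> Re w} \<and> Re w \<le> 0"
      then have w: "w \<in> Bl" "Re w = 0" by auto
      have "sin (Im w) < 0"
        using BlIm[OF w(1)] sin_gt_zero[of "- Im w"] pi_gt3 by simp
      then show "0 = F w" using Fbd[of w] BlW[OF w(1)] w flat1_nonpos by (simp add: F_def)
    qed
    then show ?thesis using eqS unfolding Ft_def by simp
  qed
  have Ft_hol: "Ft holomorphic_on Bl"
  proof (rule holomorphic_on_paste_across_line[of Bl 1 _ 0])
    show "open Bl" by (simp add: Bl_def)
    show "Ft holomorphic_on Bl \<inter> {z. 1 \<bullet> z < 0}"
      by (rule holomorphic_transform[of "\<lambda>_. 0"]) (auto simp: Ft_def inner_complex_def)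
    have "F holomorphic_on Bl \<inter> {z. 0 < 1 \<bullet> z}"
      by (rule holomorphic_on_subset[OF holF]) (use BlW in \<open>auto simp: Wp_def inner_complex_def\<close>)
    then show "Ft holomorphic_on Bl \<inter> {z. 0 < 1 \<bullet> z}"
      by (rule holomorphic_transform) (auto simp: Ft_def inner_complex_def)
  qed (use Ft_cont in auto)
  have Ft0: "Ft w = 0" if "w \<in> Bl" for w
  proof (rule analytic_continuation_open[of "Bl \<inter> {w. Re w < 0}" Bl Ft "\<lambda>_. 0"])
    show "open (Bl \<inter> {w. Re w < 0})" by (auto simp: Bl_def intro!: open_Int open_halfspace_Re_lt)
    have "c - complex_of_real (\<rho>/8) \<in> Bl \<inter> {w. Re w < 0}"
      using \<rho> by (auto simp: Bl_def c_def dist_norm)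
    then show "Bl \<inter> {w. Re w < 0} \<noteq> {}" by blast
  qed (use Ft_hol that in \<open>auto simp: Bl_def Ft_def\<close>)
  \<comment> \<open>Step 2: vanishing on Wp\<close>
  have F0: "F w = 0" if "w \<in> Wp" for w
  proof (rule analytic_continuation_open[of "Bl \<inter> {w. 0 < Re w}" Wp F "\<lambda>_. 0"])
    show "open (Bl \<inter> {w. 0 < Re w})" by (auto simp: Bl_def intro!: open_Int open_halfspace_Re_gt)
    have "c + complex_of_real (\<rho>/8) \<in> Bl \<inter> {w. 0 < Re w}"
      using \<rho> by (auto simp: Bl_def c_def dist_norm)
    then show "Bl \<inter> {w. 0 < Re w} \<noteq> {}" by blast
    show "Bl \<inter> {w. 0 < Re w} \<subseteq> Wp" using BlW by (auto simp: Wp_def)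
    show "connected Wp" by (rule convex_connected[OF convWp])
    fix z assume "z \<in> Bl \<inter> {w. 0 < Re w}"
    then show "F z = 0" using Ft0[of z] by (auto simp: Ft_def)
  qed (use openWp holF that in auto)
  \<comment> \<open>Step 3: contradiction on the positive arc\<close>
  define y0 where "y0 = complex_of_real (\<rho>/2) * \<i>"
  define S where "S = ball y0 (\<rho>/4) \<inter> {w. 0 < Re w}"
  have ny0: "norm y0 = \<rho>/2" using \<rho> by (simp add: y0_def norm_mult)
  have clS: "closure S \<subseteq> Wc"
  proof -
    have "closure S \<subseteq> cball y0 (\<rho>/4) \<inter> {w. 0 \<le> Re w}"
      unfolding S_def by (rule closure_minimal) (auto intro!: closed_Int closed_halfspace_Re_ge)
    moreover have "norm w < \<rho>" if "w \<in> cball y0 (\<rho>/4)" for w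
    proof -
      have "norm w \<le> norm y0 + norm (w - y0)" by (metis add.commute diff_add_cancel norm_triangle_ineq)
      also have "norm (w - y0) \<le> \<rho>/4" using that by (simp add: dist_norm norm_minus_commute)
      finally show ?thesis using ny0 \<rho> by linarith
    qed
    ultimately show ?thesis by (auto simp: Wc_def)
  qed
  have SWp: "S \<subseteq> Wp" using clS closure_subset[of S] by (auto simp: S_def Wc_def Wp_def)
  have y0cl: "y0 \<in> closure S"
    unfolding closure_approachable
  proof (intro allI impI)
    fix e :: real assume e: "e > 0"
    define t where "t = min (e/2) (\<rho>/8)"
    have t: "0 < t" "t < e" "t < \<rho>/4" using e \<rho> by (auto simp: t_def)
    have "y0 + complex_of_real t \<in> S" using t by (simp add: S_def y0_def dist_norm)
    moreover have "dist (y0 + complex_of_real t) y0 < e" using t by (simp add: dist_norm)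
    ultimately show "\<exists>y\<in>S. dist y y0 < e" by blast
  qed
  have "F y0 = 0"
    by (rule continuous_constant_on_closure[OF continuous_on_subset[OF contF clS] _ y0cl])
       (use F0 SWp in auto)
  moreover have "F y0 = complex_of_real (flat 1 (sin (\<rho>/2)))"
    using Fbd[of y0] ny0 \<rho> by (simp add: F_def y0_def)
  moreover have "sin (\<rho>/2) > 0" using \<rho> pi_gt3 by (intro sin_gt_zero) auto
  ultimately show False using flat1_pos[of "sin (\<rho>/2)"] by simp
qed



lemma Dn_lin:
  assumes "\<And>j t. j < l \<Longrightarrow> Dn j f differentiable at t" "\<And>j t. j < l \<Longrightarrow> Dn j g differentiable at t"
  shows "Dn l (\<lambda>t. f t + c * g t) = (\<lambda>t. Dn l f t + c * Dn l g t)"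
  using assms
proof (induction l)
  case (Suc l)
  have IH: "Dn l (\<lambda>t. f t + c * g t) = (\<lambda>t. Dn l f t + c * Dn l g t)"
    using Suc by auto
  have "vector_derivative (\<lambda>t. Dn l f t + c * Dn l g t) (at t) =
        vector_derivative (Dn l f) (at t) + c * vector_derivative (Dn l g) (at t)" for t
  proof (rule vector_derivative_at)
    have "(Dn l f has_vector_derivative vector_derivative (Dn l f) (at t)) (at t)"
      using Suc.prems(1)[of l t] by (simp add: vector_derivative_works[symmetric])
    moreover have "(Dn l g has_vector_derivative vector_derivative (Dn l g) (at t)) (at t)"
      using Suc.prems(2)[of l t] by (simp add: vector_derivative_works[symmetric])
    ultimately show "((\<lambda>t. Dn l f t + c * Dn l g t) has_vector_derivative
        vector_derivative (Dn l f) (at t) + c * vector_derivative (Dn l g) (at t)) (at t)"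
      by (intro has_vector_derivative_add has_vector_derivative_mult_right)
  qed
  then show ?case using IH by simp
qed simp

lemma Dn_zero: "Dn l (\<lambda>t. 0) = (\<lambda>t. 0)"
  by (induction l) (auto simp: vector_derivative_const_at)

lemma Dn_smul:
  assumes "\<And>j t. j < l \<Longrightarrow> Dn j g differentiable at t"
  shows "Dn l (\<lambda>t. c * g t) = (\<lambda>t. c * Dn l g t)"
  using Dn_lin[of l "\<lambda>t. 0" g c] assms by (simp add: Dn_zero)

lemma Ck_add:
  assumes u: "u \<in> Ck k" and v: "v \<in> Ck k"
  shows "(\<lambda>z. u z + c * v z) \<in> Ck k"
proof -
  have oT: "onT (\<lambda>z. u z + c * v z) = (\<lambda>t. onT u t + c * onT v t)" by (simp add: onT_def)
  have eq: "Dn l (onT (\<lambda>z. u z + c * v z)) = (\<lambda>t. Dn l (onT u) t + c * Dn l (onT v) t)"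
    if "enat l \<le> k" for l
    unfolding oT
  proof (rule Dn_lin)
    fix j t assume "j < l"
    then have "enat j < k" using that by (meson enat_ord_simps(2) less_le_trans)
    then show "Dn j (onT u) differentiable at t" "Dn j (onT v) differentiable at t"
      using u v by (auto simp: Ck_def)
  qed
  show ?thesis
    unfolding Ck_def
  proof (intro CollectI conjI allI impI)
    fix z :: complex assume "z \<notin> sphere 0 1" then show "u z + c * v z = 0" using u v by (simp add: Ck_def)
  next
    fix l assume l: "enat l \<le> k"
    show "continuous_on UNIV (Dn l (onT (\<lambda>z. u z + c * v z)))"
      unfolding eq[OF l] using u v l by (auto simp: Ck_def intro!: continuous_intros)
  next
    fix l t assume l: "enat l < k"
    then have "Dn l (onT u) differentiable at t" "Dn l (onT v) differentiable at t"
      using u v by (auto simp: Ck_def)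
    then show "Dn l (onT (\<lambda>z. u z + c * v z)) differentiable at t"
      unfolding eq[OF less_imp_le[OF l]]
      by (intro differentiable_add differentiable_mult differentiable_const)
  qed
qed

lemma Ck_cont_sphere:
  assumes u: "u \<in> Ck k"
  shows "continuous_on (sphere 0 1) u"
proof -
  have k0: "enat 0 \<le> k" by (simp add: zero_enat_def[symmetric])
  have "continuous_on UNIV (Dn 0 (onT u))" using u k0 unfolding Ck_def by blast
  then have cT: "continuous_on UNIV (onT u)" by simp
  show ?thesis
    unfolding continuous_on_eq_continuous_within
  proof
    fix z :: complex assume z: "z \<in> sphere 0 1"
    define th where "th w = Arg (w * cnj z) + Arg z" for w
    have zc: "z * cnj z = 1" using complex_norm_square[of z] z by simp
    have "isCont Arg (z * cnj z)" by (rule continuous_at_Arg) (simp add: zc)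
    then have "isCont (\<lambda>w. Arg (w * cnj z)) z" by (rule isCont_o2[rotated]) (intro continuous_intros)
    then have "isCont th z" unfolding th_def by (intro continuous_intros)
    moreover have "isCont (onT u) (th z)"
      using cT by (simp add: continuous_on_eq_continuous_at)
    ultimately have "isCont (\<lambda>w. onT u (th w)) z" by (rule isCont_o2)
    then have c1: "continuous (at z within sphere 0 1) (\<lambda>w. onT u (th w))"
      by (rule continuous_at_imp_continuous_within)
    show "continuous (at z within sphere 0 1) u"
    proof (rule continuous_transform_within[OF c1 zero_less_one z])
      fix w :: complex assume w: "w \<in> sphere 0 1"
      have nz: "w * cnj z \<noteq> 0" "z \<noteq> 0" using w z by auto
      have "cis (th w) = cis (Arg (w * cnj z)) * cis (Arg z)" by (simp add: th_def cis_mult)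
      also have "\<dots> = (w * cnj z) * z"
        using nz w z by (simp add: cis_Arg sgn_div_norm norm_mult)
      also have "\<dots> = w" using zc by (simp add: mult.assoc mult.commute[of "cnj z"])
      finally show "onT u (th w) = u w" by (simp add: onT_def)
    qed
  qed
qed

definition Ext :: "complex \<Rightarrow> (complex \<Rightarrow> complex) \<Rightarrow> bool" where
  "Ext z0 u \<longleftrightarrow> (\<exists>r>0. \<exists>g. continuous_on (sphere 0 1 \<union> Omega z0 r) g \<and> g holomorphic_on Omega z0 r \<and>
      (\<forall>z \<in> ball z0 r \<inter> sphere 0 1. g z = u z))"

lemma U2_alt: "U2 z0 k = {u \<in> Ck k. \<not> Ext z0 u}"
  by (simp add: U2_def Ext_def)

lemma Ext_lin:
  assumes "Ext z0 f" "Ext z0 g"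
  shows "Ext z0 (\<lambda>z. a * f z + b * g z)"
proof -
  obtain r1 g1 where r1: "r1 > 0" "continuous_on (sphere 0 1 \<union> Omega z0 r1) g1" "g1 holomorphic_on Omega z0 r1"
    "\<forall>z \<in> ball z0 r1 \<inter> sphere 0 1. g1 z = f z" using assms(1) by (auto simp: Ext_def)
  obtain r2 g2 where r2: "r2 > 0" "continuous_on (sphere 0 1 \<union> Omega z0 r2) g2" "g2 holomorphic_on Omega z0 r2"
    "\<forall>z \<in> ball z0 r2 \<inter> sphere 0 1. g2 z = g z" using assms(2) by (auto simp: Ext_def)
  define r where "r = min r1 r2"
  have s1: "Omega z0 r \<subseteq> Omega z0 r1" and s2: "Omega z0 r \<subseteq> Omega z0 r2"
    by (auto intro!: Omega_mono simp: r_def)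
  show ?thesis unfolding Ext_def
  proof (intro exI[of _ r] conjI exI[of _ "\<lambda>z. a * g1 z + b * g2 z"])
    show "r > 0" using r1 r2 by (simp add: r_def)
    show "continuous_on (sphere 0 1 \<union> Omega z0 r) (\<lambda>z. a * g1 z + b * g2 z)"
      using continuous_on_subset[OF r1(2), of "sphere 0 1 \<union> Omega z0 r"]
        continuous_on_subset[OF r2(2), of "sphere 0 1 \<union> Omega z0 r"] s1 s2
      by (auto intro!: continuous_intros)
    show "(\<lambda>z. a * g1 z + b * g2 z) holomorphic_on Omega z0 r"
      using holomorphic_on_subset[OF r1(3) s1] holomorphic_on_subset[OF r2(3) s2]
      by (auto intro!: holomorphic_intros)
    show "\<forall>z\<in>ball z0 r \<inter> sphere 0 1. a * g1 z + b * g2 z = a * f z + b * g z"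
      using r1(4) r2(4) by (auto simp: r_def)
  qed
qed



definition Fn :: "complex \<Rightarrow> nat \<Rightarrow> (complex \<Rightarrow> complex) set" where
  "Fn z0 n = {v. \<exists>g. continuous_on (sphere 0 1 \<union> Omega z0 (1 / real (Suc n))) g \<and>
      g holomorphic_on Omega z0 (1 / real (Suc n)) \<and> (\<forall>z\<in>sphere 0 1. g z = v z) \<and>
      (\<forall>z\<in>Omega z0 (1 / real (Suc n)). norm (g z) \<le> real (Suc n))}"

lemma approx_ext:
  assumes z0: "norm z0 = 1"
    and appr: "\<And>e. e > 0 \<Longrightarrow> \<exists>v\<in>Fn z0 n. \<forall>z\<in>sphere 0 1. norm (v z - u z) < e"
  shows "Ext z0 u"
proof -
  define R where "R = 1 / real (Suc n)"
  define M where "M = real (Suc n)"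
  define r' where "r' = R/2"
  define r where "r = r'/4"
  have R: "0 < R" "R \<le> 1" by (auto simp: R_def)
  have r': "0 < r'" "r' \<le> 1/2" "r' < R" using R by (auto simp: r'_def)
  have r: "0 < r" "r < R" using r' by (auto simp: r_def)
  have M: "0 \<le> M" by (simp add: M_def)
  have "\<forall>m. \<exists>v g. (\<forall>z\<in>sphere 0 1. norm (v z - u z) < inverse (real (Suc m))) \<and>
      continuous_on (sphere 0 1 \<union> Omega z0 R) g \<and> g holomorphic_on Omega z0 R \<and>
      (\<forall>z\<in>sphere 0 1. g z = v z) \<and> (\<forall>z\<in>Omega z0 R. norm (g z) \<le> M)"
  proof
    fix m
    obtain v where "v \<in> Fn z0 n" "\<forall>z\<in>sphere 0 1. norm (v z - u z) < inverse (real (Suc m))"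
      using appr[of "inverse (real (Suc m))"] by auto
    then show "\<exists>v g. (\<forall>z\<in>sphere 0 1. norm (v z - u z) < inverse (real (Suc m))) \<and>
      continuous_on (sphere 0 1 \<union> Omega z0 R) g \<and> g holomorphic_on Omega z0 R \<and>
      (\<forall>z\<in>sphere 0 1. g z = v z) \<and> (\<forall>z\<in>Omega z0 R. norm (g z) \<le> M)"
      unfolding Fn_def R_def M_def by blast
  qed
  then obtain v where "\<forall>m. \<exists>g. (\<forall>z\<in>sphere 0 1. norm (v m z - u z) < inverse (real (Suc m))) \<and>
      continuous_on (sphere 0 1 \<union> Omega z0 R) g \<and> g holomorphic_on Omega z0 R \<and>
      (\<forall>z\<in>sphere 0 1. g z = v m z) \<and> (\<forall>z\<in>Omega z0 R. norm (g z) \<le> M)"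
    by (rule choice[THEN exE]) blast
  then obtain g where vg: "\<forall>m. (\<forall>z\<in>sphere 0 1. norm (v m z - u z) < inverse (real (Suc m))) \<and>
      continuous_on (sphere 0 1 \<union> Omega z0 R) (g m) \<and> g m holomorphic_on Omega z0 R \<and>
      (\<forall>z\<in>sphere 0 1. g m z = v m z) \<and> (\<forall>z\<in>Omega z0 R. norm (g m z) \<le> M)"
    by (rule choice[THEN exE]) blast
  have vu: "\<And>m z. z \<in> sphere 0 1 \<Longrightarrow> norm (v m z - u z) < inverse (real (Suc m))"
    and contg: "\<And>m. continuous_on (sphere 0 1 \<union> Omega z0 R) (g m)"
    and holg: "\<And>m. g m holomorphic_on Omega z0 R"
    and gv: "\<And>m z. z \<in> sphere 0 1 \<Longrightarrow> g m z = v m z"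
    and gM: "\<And>m z. z \<in> Omega z0 R \<Longrightarrow> norm (g m z) \<le> M"
    using vg by blast+
  define S' where "S' = sphere 0 1 \<union> Omega z0 r"
  have S'sub: "S' \<subseteq> sphere 0 1 \<union> Omega z0 R" using Omega_mono[of r R z0] r by (auto simp: S'_def)
  have cauchy: "\<exists>N. \<forall>m p x. N \<le> m \<and> N \<le> p \<and> x \<in> S' \<longrightarrow> dist (g m x) (g p x) < e" if e: "e > 0" for e
  proof -
    define A where "A = 2 * M"
    define a1 where "a1 = sqrt (3*r'/8)"
    define a2 where "a2 = sqrt (r'/4)"
    define d where "d = a1 - a2"
    have A: "0 \<le> A" using M by (simp add: A_def)
    have "r'/4 < 3*r'/8" using r'(1) by simp
    then have "a2 < a1" unfolding a1_def a2_def by (rule real_sqrt_less_mono)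
    then have d: "0 < d" by (simp add: d_def)
    have a1: "0 \<le> a1" using r'(1) by (simp add: a1_def)
    define lam where "lam = ln (2 * A / e + 1) / d"
    have lam: "0 \<le> lam" using A e d by (simp add: lam_def)
    have "exp (lam * d) = 2 * A / e + 1" unfolding lam_def using d A e
      by (simp add: add_nonneg_pos)
    then have eld: "A * exp (- lam * d) < e/2"
    proof -
      assume h: "exp (lam * d) = 2 * A / e + 1"
      have "A * exp (- lam * d) = A / exp (lam * d)" by (simp add: exp_minus divide_inverse)
      also have "\<dots> = A * e / (2 * A + e)" using h e A by (simp add: field_simps)
      also have "\<dots> < e / 2" using e A by (simp add: field_simps)
      finally show ?thesis .
    qed
    have eld1: "exp (- lam * d) \<le> 1" using lam d by simp
    define \<delta>0 where "\<delta>0 = e / (4 * exp (lam * a1))"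
    have \<delta>0: "0 < \<delta>0" using e by (simp add: \<delta>0_def)
    have \<delta>0e: "\<delta>0 * exp (lam * a1) = e/4" by (simp add: \<delta>0_def)
    have "exp (lam * a1) \<ge> 1" using lam a1 by simp
    then have \<delta>0le: "\<delta>0 \<le> e/4" using \<delta>0e \<delta>0
      by (metis mult_le_cancel_left1 order.strict_iff_not)
    obtain N where N: "2 / \<delta>0 < real N" using reals_Archimedean2 by blast
    have invN: "inverse (real (Suc m)) < \<delta>0/2" if "N \<le> m" for m
    proof -
      have "2 / \<delta>0 < real (Suc m)" using N that by simp
      then show ?thesis using \<delta>0 by (simp add: field_simps)
    qed
    show ?thesis
    proof (intro exI[of _ N] allI impI, elim conjE)
      fix m p x assume m: "N \<le> m" and p: "N \<le> p" and x: "x \<in> S'"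
      define \<delta> where "\<delta> = inverse (real (Suc m)) + inverse (real (Suc p))"
      have \<delta>: "0 \<le> \<delta>" "\<delta> < \<delta>0" using invN[OF m] invN[OF p] by (auto simp: \<delta>_def)
      have dS: "norm (g m w - g p w) \<le> \<delta>" if "w \<in> sphere 0 1" for w
      proof -
        have "norm (g m w - g p w) = norm ((v m w - u w) - (v p w - u w))" using gv that by simp
        also have "\<dots> \<le> norm (v m w - u w) + norm (v p w - u w)" by (rule norm_triangle_ineq4)
        also have "\<dots> \<le> \<delta>" using vu[OF that, of m] vu[OF that, of p] by (simp add: \<delta>_def)
        finally show ?thesis .
      qed
      show "dist (g m x) (g p x) < e"
      proof (cases "x \<in> sphere 0 1")
        case True
        then show ?thesis using dS[OF True] \<delta> \<delta>0le e by (simp add: dist_norm)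
      next
        case False
        then have xO: "x \<in> Omega z0 (r'/4)" using x by (simp add: S'_def r_def)
        have dA: "norm (g m w - g p w) \<le> A" if "w \<in> Omega z0 R" for w
          using norm_triangle_ineq4[of "g m w" "g p w"] gM[OF that, of m] gM[OF that, of p]
          by (simp add: A_def)
        have "norm (g m x - g p x) \<le> (A + \<delta> * exp (lam * a1)) * exp (- lam * d)"
          unfolding a1_def d_def a2_def
          by (rule estimate[OF z0 r' _ _ dS dA A \<delta>(1) lam xO])
             (auto intro!: continuous_intros holomorphic_intros contg holg)
        also have "\<dots> = A * exp (- lam * d) + \<delta> * exp (lam * a1) * exp (- lam * d)"
          by (simp add: algebra_simps)
        also have "\<delta> * exp (lam * a1) * exp (- lam * d) \<le> \<delta> * exp (lam * a1)"
          using eld1 \<delta> by (simp add: mult_left_le)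
        also have "\<delta> * exp (lam * a1) \<le> \<delta>0 * exp (lam * a1)"
          using \<delta> by (simp add: mult_right_mono)
        finally show ?thesis using eld \<delta>0e e by (simp add: dist_norm)
      qed
    qed
  qed
  have "\<exists>l. \<forall>e>0. \<exists>N. \<forall>n x. N \<le> n \<and> x \<in> S' \<longrightarrow> dist (g n x) (l x) < e"
    using uniformly_convergent_eq_cauchy[of "\<lambda>x. x \<in> S'" g] cauchy by blast
  then obtain l where l: "\<And>e. e > 0 \<Longrightarrow> \<exists>N. \<forall>n x. N \<le> n \<and> x \<in> S' \<longrightarrow> dist (g n x) (l x) < e"
    by blast
  have ul: "uniform_limit S' g l sequentially"
    unfolding uniform_limit_sequentially_iff using l by blast
  have contl: "continuous_on S' l"
  proof (rule uniform_limit_theorem[OF _ ul])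
    have "\<forall>m. continuous_on S' (g m)" using contg S'sub continuous_on_subset by blast
    then show "\<forall>\<^sub>F m in sequentially. continuous_on S' (g m)" by (rule always_eventually)
  qed simp
  have holl: "l holomorphic_on Omega z0 r"
    unfolding holomorphic_on_def
  proof
    fix x assume x: "x \<in> Omega z0 r"
    obtain \<epsilon> where \<epsilon>: "\<epsilon> > 0" "cball x \<epsilon> \<subseteq> Omega z0 r"
      using open_contains_cball open_Omega x by blast
    have cb: "cball x \<epsilon> \<subseteq> Omega z0 R" using \<epsilon>(2) Omega_mono[of r R z0] r by auto
    have "cball x \<epsilon> \<subseteq> S'" using \<epsilon>(2) by (auto simp: S'_def)
    then have ul2: "uniform_limit (cball x \<epsilon>) g l sequentially" by (rule uniform_limit_on_subset[OF ul])
    obtain "l holomorphic_on ball x \<epsilon>"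
    proof (rule holomorphic_uniform_limit[OF _ ul2])
      have c1: "continuous_on (cball x \<epsilon>) (g m)" for m
        by (rule continuous_on_subset[OF contg]) (use cb in blast)
      have h1: "g m holomorphic_on ball x \<epsilon>" for m
        by (rule holomorphic_on_subset[OF holg]) (use cb ball_subset_cball[of x \<epsilon>] in blast)
      show "\<forall>\<^sub>F n in sequentially. continuous_on (cball x \<epsilon>) (g n) \<and> g n holomorphic_on ball x \<epsilon>"
        using c1 h1 by (intro always_eventually allI conjI)
    qed auto
    then have "l field_differentiable at x"
      using \<epsilon>(1) by (intro holomorphic_on_imp_differentiable_at[of _ "ball x \<epsilon>"]) auto
    then show "l field_differentiable at x within Omega z0 r"
      by (rule field_differentiable_at_within)
  qed
  have agree: "l z = u z" if z: "z \<in> sphere 0 1" for z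
  proof -
    have zS: "z \<in> S'" using z by (simp add: S'_def)
    have t1: "(\<lambda>m. g m z) \<longlonglongrightarrow> l z" by (rule tendsto_uniform_limitI[OF ul zS])
    have "\<forall>m. norm (v m z - u z) \<le> inverse (real (Suc m))" using vu[OF z] less_imp_le by blast
    then have ev: "\<forall>\<^sub>F m in sequentially. norm (v m z - u z) \<le> inverse (real (Suc m))"
      by (rule always_eventually)
    have ev0: "\<forall>\<^sub>F m in sequentially. 0 \<le> norm (v m z - u z)" by (rule always_eventually) simp
    have "(\<lambda>m. norm (v m z - u z)) \<longlonglongrightarrow> 0"
      by (rule tendsto_sandwich[OF ev0 ev tendsto_const LIMSEQ_inverse_real_of_nat])
    then have "(\<lambda>m. v m z) \<longlonglongrightarrow> u z"
      by (simp add: tendsto_norm_zero_iff LIM_zero_iff)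
    moreover have "(\<lambda>m. g m z) = (\<lambda>m. v m z)" using gv[OF z] by auto
    ultimately show ?thesis using t1 LIMSEQ_unique by metis
  qed
  show ?thesis unfolding Ext_def
  proof (intro exI[of _ r] conjI exI[of _ l] ballI)
    show "0 < r" using r by simp
    show "continuous_on (sphere 0 1 \<union> Omega z0 r) l" using contl by (simp only: S'_def)
    show "l holomorphic_on Omega z0 r" by (rule holl)
    show "l z = u z" if "z \<in> ball z0 r \<inter> sphere 0 1" for z using that agree by simp
  qed
qed



lemma ext_Fn:
  assumes z0: "norm z0 = 1" and u: "u \<in> Ck k" and ex: "Ext z0 u"
  shows "\<exists>n. u \<in> Fn z0 n"
proof -
  obtain r g where r: "r > 0" and contg: "continuous_on (sphere 0 1 \<union> Omega z0 r) g"
    and holg: "g holomorphic_on Omega z0 r" and eqg: "\<forall>z\<in>ball z0 r \<inter> sphere 0 1. g z = u z"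
    using ex by (auto simp: Ext_def)
  define K where "K = cball z0 (r/2) \<inter> {w. 1 \<le> norm w}"
  have Ksub: "K \<subseteq> sphere 0 1 \<union> Omega z0 r"
  proof
    fix w assume "w \<in> K"
    then have w: "dist z0 w \<le> r/2" "1 \<le> norm w" by (auto simp: K_def)
    show "w \<in> sphere 0 1 \<union> Omega z0 r"
    proof (cases "norm w = 1")
      case True then show ?thesis by simp
    next
      case False then show ?thesis using w r by (auto simp: Omega_def)
    qed
  qed
  have "compact K" unfolding K_def
    by (intro compact_Int_closed compact_cball closed_Collect_le continuous_intros)
  then have "compact (g ` K)" by (rule compact_continuous_image[OF continuous_on_subset[OF contg Ksub]])
  then obtain B where B: "\<forall>y\<in>g ` K. norm y \<le> B" using compact_imp_bounded bounded_iff by metis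
  define n where "n = nat \<lceil>B\<rceil> + nat \<lceil>2/r\<rceil>"
  have "B \<le> real (nat \<lceil>B\<rceil>)" "2/r \<le> real (nat \<lceil>2/r\<rceil>)" by (rule real_nat_ceiling_ge)+
  then have nB: "B \<le> real (Suc n)" and nr: "2/r < real (Suc n)" by (auto simp: n_def)
  define \<rho> where "\<rho> = 1 / real (Suc n)"
  have \<rho>: "0 < \<rho>" "\<rho> < r/2" using nr r by (auto simp: \<rho>_def field_simps)
  define g' where "g' w = (if w \<in> sphere 0 1 then u w else g w)" for w
  define S where "S = sphere 0 1 \<union> Omega z0 \<rho>"
  define P1 where "P1 = S \<inter> cball z0 (r/2)"
  define P2 where "P2 = S \<inter> - ball z0 (r/2)"
  have SU: "S = P1 \<union> P2" by (auto simp: P1_def P2_def)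
  have Or: "Omega z0 \<rho> \<subseteq> Omega z0 r" using \<rho> by (intro Omega_mono) auto
  have c1: "continuous_on P1 g'"
  proof (rule continuous_on_eq[OF continuous_on_subset[OF contg]])
    show "P1 \<subseteq> sphere 0 1 \<union> Omega z0 r" using Or by (auto simp: P1_def S_def)
    fix w assume w: "w \<in> P1"
    show "g w = g' w"
    proof (cases "w \<in> sphere 0 1")
      case True
      then have "w \<in> ball z0 r \<inter> sphere 0 1" using w r by (auto simp: P1_def)
      then show ?thesis using eqg True by (simp add: g'_def)
    qed (simp add: g'_def)
  qed
  have P2s: "P2 \<subseteq> sphere 0 1"
  proof
    fix w assume w: "w \<in> P2"
    show "w \<in> sphere 0 1"
    proof (rule ccontr)
      assume "w \<notin> sphere 0 1"
      then have "w \<in> Omega z0 \<rho>" using w by (auto simp: P2_def S_def)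
      then have "dist z0 w < r/2" using \<rho> by (auto simp: Omega_def)
      then show False using w by (auto simp: P2_def)
    qed
  qed
  have c2: "continuous_on P2 g'"
  proof (rule continuous_on_eq[OF continuous_on_subset[OF Ck_cont_sphere[OF u] P2s]])
    fix w assume "w \<in> P2" then show "u w = g' w" using P2s by (auto simp: g'_def)
  qed
  have contg': "continuous_on S g'"
    unfolding SU
  proof (rule continuous_on_Un_local[OF _ _ c1 c2])
    have "closedin (top_of_set S) P1" unfolding P1_def by (rule closedin_closed_Int) simp
    then show "closedin (top_of_set (P1 \<union> P2)) P1" using SU by simp
    have "closedin (top_of_set S) P2" unfolding P2_def by (rule closedin_closed_Int) (simp add: closed_Compl)
    then show "closedin (top_of_set (P1 \<union> P2)) P2" using SU by simp
  qed
  have holg': "g' holomorphic_on Omega z0 \<rho>"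
    by (rule holomorphic_transform[OF holomorphic_on_subset[OF holg Or]]) (auto simp: g'_def Omega_def)
  have bd: "norm (g' w) \<le> real (Suc n)" if w: "w \<in> Omega z0 \<rho>" for w
  proof -
    have "w \<in> K" using w \<rho> by (auto simp: K_def Omega_def)
    then have "norm (g w) \<le> B" using B by auto
    moreover have "g' w = g w" using w by (auto simp: g'_def Omega_def)
    ultimately show ?thesis using nB by simp
  qed
  have "u \<in> {v. \<exists>g. continuous_on (sphere 0 1 \<union> Omega z0 \<rho>) g \<and> g holomorphic_on Omega z0 \<rho> \<and>
      (\<forall>z\<in>sphere 0 1. g z = v z) \<and> (\<forall>z\<in>Omega z0 \<rho>. norm (g z) \<le> real (Suc n))}"
  proof (rule CollectI, rule exI[of _ g'], intro conjI ballI)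
    show "continuous_on (sphere 0 1 \<union> Omega z0 \<rho>) g'" using contg' by (simp only: S_def)
    show "g' holomorphic_on Omega z0 \<rho>" by (rule holg')
    show "g' z = u z" if "z \<in> sphere 0 1" for z using that by (simp add: g'_def)
    show "norm (g' z) \<le> real (Suc n)" if "z \<in> Omega z0 \<rho>" for z by (rule bd[OF that])
  qed
  then have "u \<in> Fn z0 n" by (simp only: Fn_def \<rho>_def)
  then show ?thesis by blast
qed

lemma sup_le_seminorm:
  assumes f: "f \<in> Ck k" and z: "z \<in> sphere 0 1"
  shows "norm (f z) \<le> seminorm_Ck 0 f"
proof -
  have k0: "enat 0 \<le> k" by (simp add: zero_enat_def[symmetric])
  have "continuous_on UNIV (Dn 0 (onT f))" using f k0 unfolding Ck_def by blast
  then have cT: "continuous_on UNIV (onT f)" by simp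
  have "cis (x + 2*pi) = cis x" for x by (simp add: complex_eq_iff)
  then have per: "\<forall>x. onT f (x + 2*pi) = onT f x" by (simp add: onT_def)
  obtain B where B: "\<forall>x. norm (onT f x) \<le> B" using periodic_bounded[OF cT per] by blast
  have bdd: "bdd_above ((\<lambda>\<theta>. norm (Dn 0 (onT f) \<theta>)) ` UNIV)" using B by (auto intro!: bdd_aboveI2)
  have "z \<noteq> 0" using z by auto
  then have "cis (Arg z) = z" using z by (simp add: cis_Arg sgn_div_norm)
  then have "norm (f z) = norm (Dn 0 (onT f) (Arg z))" by (simp add: onT_def)
  also have "\<dots> \<le> seminorm_Ck 0 f" unfolding seminorm_Ck_def by (rule cSUP_upper[OF UNIV_I bdd])
  finally show ?thesis .
qed

lemma not_Ext: "norm z0 = 1 \<Longrightarrow> \<not> Ext z0 (hfun z0)"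
  unfolding Ext_def by (rule not_ext)

theorem theorem3p12:
  fixes z0 :: complex and k :: enat
  assumes "z0 \<in> sphere 0 1"
  shows "gdelta_in (Ck_top k) (U2 z0 k) \<and> (Ck_top k) closure_of (U2 z0 k) = topspace (Ck_top k)"
proof -
  have z0: "norm z0 = 1" using assms by simp
  have top: "topspace (Ck_top k) = Ck k"
  proof
    have "Ck_open k (topspace (Ck_top k))" by (simp only: openin_Ck_top[symmetric] openin_topspace)
    then show "topspace (Ck_top k) \<subseteq> Ck k" by (simp add: Ck_open_def)
    have "openin (Ck_top k) (Ck k)" unfolding openin_Ck_top Ck_open_def
      by (intro conjI ballI exI[of _ "0::nat"] exI[of _ "1::real"]) auto
    then show "Ck k \<subseteq> topspace (Ck_top k)" by (rule openin_subset)
  qed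
  define Cl where "Cl n = {u \<in> Ck k. \<forall>e>0. \<exists>v\<in>Fn z0 n. \<forall>z\<in>sphere 0 1. norm (v z - u z) < e}" for n
  have U2eq: "U2 z0 k = \<Inter> (range (\<lambda>n. Ck k - Cl n))"
  proof (rule set_eqI, rule iffI)
    fix u assume "u \<in> U2 z0 k"
    then have u: "u \<in> Ck k" "\<not> Ext z0 u" by (auto simp: U2_alt)
    have "u \<notin> Cl n" for n
    proof
      assume "u \<in> Cl n"
      then have "\<And>e. e > 0 \<Longrightarrow> \<exists>v\<in>Fn z0 n. \<forall>z\<in>sphere 0 1. norm (v z - u z) < e"
        by (simp add: Cl_def)
      then have "Ext z0 u" by (rule approx_ext[OF z0])
      with u show False by simp
    qed
    then show "u \<in> \<Inter> (range (\<lambda>n. Ck k - Cl n))" using u by auto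
  next
    fix u assume "u \<in> \<Inter> (range (\<lambda>n. Ck k - Cl n))"
    then have u: "u \<in> Ck k" "\<And>n. u \<notin> Cl n" by auto
    have "\<not> Ext z0 u"
    proof
      assume "Ext z0 u"
      then obtain n where "u \<in> Fn z0 n" using ext_Fn[OF z0 u(1)] by blast
      then have "u \<in> Cl n" using u(1) by (auto simp: Cl_def intro!: bexI[of _ u])
      then show False using u(2) by blast
    qed
    then show "u \<in> U2 z0 k" using u by (simp add: U2_alt)
  qed
  have opn: "openin (Ck_top k) (Ck k - Cl n)" for n
    unfolding openin_Ck_top Ck_open_def
  proof (intro conjI ballI)
    show "Ck k - Cl n \<subseteq> Ck k" by blast
    fix u assume u: "u \<in> Ck k - Cl n"
    then have "\<not> (\<forall>e>0. \<exists>v\<in>Fn z0 n. \<forall>z\<in>sphere 0 1. norm (v z - u z) < e)"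
      by (auto simp: Cl_def)
    then obtain e where e0: "e > 0" and ee: "\<not> (\<exists>v\<in>Fn z0 n. \<forall>z\<in>sphere 0 1. norm (v z - u z) < e)"
      by blast
    have e: "e > 0" "\<And>v. v \<in> Fn z0 n \<Longrightarrow> \<exists>z\<in>sphere 0 1. e \<le> norm (v z - u z)"
      using e0 ee by (auto simp: not_less)
    show "\<exists>N \<epsilon>. \<epsilon> > 0 \<and> {v \<in> Ck k. \<forall>l\<le>N. enat l \<le> k \<longrightarrow> seminorm_Ck l (\<lambda>z. v z - u z) < \<epsilon>} \<subseteq> Ck k - Cl n"
    proof (intro exI[of _ "0::nat"] exI[of _ "e/2"] conjI subsetI)
      show "e/2 > 0" using e by simp
      fix w assume "w \<in> {v \<in> Ck k. \<forall>l\<le>0. enat l \<le> k \<longrightarrow> seminorm_Ck l (\<lambda>z. v z - u z) < e/2}"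
      then have w: "w \<in> Ck k" and sw: "seminorm_Ck 0 (\<lambda>z. w z - u z) < e/2"
        by (auto simp: zero_enat_def[symmetric])
      have "(\<lambda>z. w z + (-1) * u z) \<in> Ck k" by (rule Ck_add) (use w u in auto)
      then have wu: "(\<lambda>z. w z - u z) \<in> Ck k" by simp
      have close: "norm (w z - u z) < e/2" if "z \<in> sphere 0 1" for z
        using sup_le_seminorm[OF wu that] sw by simp
      show "w \<in> Ck k - Cl n"
      proof
        show "w \<in> Ck k" by fact
        show "w \<notin> Cl n"
        proof
          assume "w \<in> Cl n"
          then have all: "\<forall>e>0. \<exists>v\<in>Fn z0 n. \<forall>z\<in>sphere 0 1. norm (v z - w z) < e" by (simp add: Cl_def)
          have "\<exists>v\<in>Fn z0 n. \<forall>z\<in>sphere 0 1. norm (v z - w z) < e/2"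
            by (rule all[rule_format]) (use e(1) in simp)
          then obtain v where v: "v \<in> Fn z0 n" "\<And>z. z \<in> sphere 0 1 \<Longrightarrow> norm (v z - w z) < e/2" by blast
          obtain z where z: "z \<in> sphere 0 1" "e \<le> norm (v z - u z)" using e(2)[OF v(1)] by blast
          have "v z - u z = (v z - w z) + (w z - u z)" by simp
          then have "norm (v z - u z) \<le> norm (v z - w z) + norm (w z - u z)" by (metis norm_triangle_ineq)
          then show False using v(2)[OF z(1)] close[OF z(1)] z(2) by linarith
        qed
      qed
    qed
  qed
  have G: "gdelta_in (Ck_top k) (U2 z0 k)"
    unfolding U2eq by (rule gdelta_in_Inter) (auto intro: open_imp_gdelta_in opn)
  have "\<forall>l. \<exists>B. \<forall>\<theta>. norm (Dn l (onT (hfun z0)) \<theta>) \<le> B" using hfun_bound by blast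
  then obtain Bh where Bh0: "\<forall>l. \<forall>\<theta>. norm (Dn l (onT (hfun z0)) \<theta>) \<le> Bh l"
    by (rule choice[THEN exE]) blast
  have Bh: "\<And>l \<theta>. norm (Dn l (onT (hfun z0)) \<theta>) \<le> Bh l" using Bh0 by blast
  have dens: "u \<in> (Ck_top k) closure_of (U2 z0 k)" if u: "u \<in> Ck k" for u
    unfolding in_closure_of
  proof (intro conjI allI impI)
    show "u \<in> topspace (Ck_top k)" using u top by simp
    fix T assume "u \<in> T \<and> openin (Ck_top k) T"
    then have uT: "u \<in> T" and oT: "Ck_open k T" by (auto simp: openin_Ck_top)
    obtain N \<epsilon> where \<epsilon>: "\<epsilon> > 0" and ball: "{v \<in> Ck k. \<forall>l\<le>N. enat l \<le> k \<longrightarrow> seminorm_Ck l (\<lambda>z. v z - u z) < \<epsilon>} \<subseteq> T"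
      using oT uT unfolding Ck_open_def by blast
    show "\<exists>y. y \<in> U2 z0 k \<and> y \<in> T"
    proof (cases "Ext z0 u")
      case False then show ?thesis using u uT by (auto simp: U2_alt)
    next
      case True
      define B where "B = 1 + (\<Sum>l\<le>N. \<bar>Bh l\<bar>)"
      have B0: "0 \<le> (\<Sum>l\<le>N. \<bar>Bh l\<bar>)" by (intro sum_nonneg) auto
      have B: "B > 0" using B0 unfolding B_def by linarith
      have BB: "Bh l \<le> B" if "l \<le> N" for l
      proof -
        have "\<bar>Bh l\<bar> \<le> (\<Sum>l\<le>N. \<bar>Bh l\<bar>)" by (rule member_le_sum) (use that in auto)
        then show ?thesis by (simp add: B_def)
      qed
      define c where "c = \<epsilon> / (2 * B)"
      have c: "c > 0" using \<epsilon> B by (simp add: c_def)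
      define v where "v z = u z + complex_of_real c * hfun z0 z" for z
      have vC: "v \<in> Ck k" unfolding v_def by (rule Ck_add[OF u hfun_Ck])
      have vE: "\<not> Ext z0 v"
      proof
        assume "Ext z0 v"
        then have E1: "Ext z0 (\<lambda>z. complex_of_real (1/c) * v z + complex_of_real (-1/c) * u z)"
          using True by (rule Ext_lin)
        have eq: "(\<lambda>z. complex_of_real (1/c) * v z + complex_of_real (-1/c) * u z) = hfun z0"
          by (rule ext) (use c in \<open>simp add: v_def field_simps\<close>)
        have E2: "Ext z0 (hfun z0)" using E1 unfolding eq .
        show False using E2 not_Ext[OF z0] by contradiction
      qed
      have vT: "v \<in> T"
      proof (rule subsetD[OF ball], intro CollectI conjI allI impI)
        show "v \<in> Ck k" by fact
        fix l assume l: "l \<le> N" "enat l \<le> k"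
        have eq: "(\<lambda>z. v z - u z) = (\<lambda>z. complex_of_real c * hfun z0 z)" by (auto simp: v_def)
        have "onT (\<lambda>z. complex_of_real c * hfun z0 z) = (\<lambda>t. complex_of_real c * onT (hfun z0) t)"
          by (simp add: onT_def)
        then have Dn_eq: "Dn l (onT (\<lambda>z. complex_of_real c * hfun z0 z)) = (\<lambda>t. complex_of_real c * Dn l (onT (hfun z0)) t)"
          using Dn_smul[of l "onT (hfun z0)" "complex_of_real c"] Dn_hfun_diff by simp
        have "seminorm_Ck l (\<lambda>z. v z - u z) \<le> c * B"
          unfolding seminorm_Ck_def eq Dn_eq
        proof (rule cSUP_least)
          fix \<theta>
          have "norm (complex_of_real c * Dn l (onT (hfun z0)) \<theta>) = c * norm (Dn l (onT (hfun z0)) \<theta>)"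
            using c by (simp add: norm_mult)
          also have "\<dots> \<le> c * B" using Bh[of l \<theta>] BB[OF l(1)] c by (intro mult_left_mono) auto
          finally show "norm (complex_of_real c * Dn l (onT (hfun z0)) \<theta>) \<le> c * B" .
        qed simp
        also have "c * B < \<epsilon>" using B \<epsilon> by (simp add: c_def field_simps)
        finally show "seminorm_Ck l (\<lambda>z. v z - u z) < \<epsilon>" .
      qed
      show ?thesis using vC vE vT by (auto simp: U2_alt)
    qed
  qed
  have "(Ck_top k) closure_of (U2 z0 k) = topspace (Ck_top k)"
  proof (rule equalityI)
    show "Ck_top k closure_of U2 z0 k \<subseteq> topspace (Ck_top k)" by (rule closure_of_subset_topspace)
    show "topspace (Ck_top k) \<subseteq> Ck_top k closure_of U2 z0 k" using dens top by blast
  qed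
  with G show ?thesis by blast
qed


end
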